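(* Let $p$ be a prime, and let $H,H_1,\dots,H_r$ be subspaces of $\mathbb F_p^k$ with $H=H_1\cap\dots\cap H_r$. Then there exists $i\in[r]$ such that $\mu(H_i)\ge\mu(H)$.
   Context: For $x\in\mathbb F_p^k$, $|x|$ is the number of nonzero coordinates, and $V^\perp$ is the orthogonal complement under the standard dot product. For a proper subspace $H<\mathbb F_p^k$, \[ \mu(H)=\max_{W>H,\ \dim W=\dim H+1}\ \min_{v\in H^\perp\setminus W^\perp}|v|, \] and $\mu(\mathbb F_p^k)=0$. *)

theory Defs
  imports "HOL-Analysis.Analysis" "Berlekamp_Zassenhaus.Finite_Field"
begin

text \<open>Vectors of F_p^k are elements of type ('p mod_ring)^'n with k = CARD('n),
  where 'p :: prime_card, so CARD('p) = p is prime.\<close>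

definition hweight :: "'a::zero ^ 'n \<Rightarrow> nat" where
  "hweight x = card {i. x $ i \<noteq> 0}"

definition dotp :: "'a::comm_ring_1 ^ 'n \<Rightarrow> 'a ^ 'n \<Rightarrow> 'a" where
  "dotp x y = (\<Sum>i\<in>UNIV. x $ i * y $ i)"

definition orth :: "('a::comm_ring_1 ^ 'n) set \<Rightarrow> ('a ^ 'n) set" where
  "orth V = {v. \<forall>h\<in>V. dotp v h = 0}"

definition mu :: "('a::field ^ 'n::finite) set \<Rightarrow> nat" where
  "mu H = (if H = UNIV then 0 else
     Max ((\<lambda>W. Min (hweight ` (orth H - orth W)))
          ` {W. vec.subspace W \<and> H \<subset> W \<and> vec.dim W = vec.dim H + 1}))"

end

theory Submission
  imports Defs
begin

lemma dotp_subspace: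
  fixes v :: "'a::field ^ 'n"
  shows "vec.subspace {x. dotp v x = 0}"
proof (rule vec.subspaceI)
  show "0 \<in> {x. dotp v x = 0}" by (simp add: dotp_def)
  show "x + y \<in> {x. dotp v x = 0}" if "x \<in> {x. dotp v x = 0}" "y \<in> {x. dotp v x = 0}" for x y
    using that by (simp add: dotp_def distrib_left sum.distrib)
  show "c *s x \<in> {x. dotp v x = 0}" if "x \<in> {x. dotp v x = 0}" for c x
  proof -
    have "dotp v (c *s x) = c * dotp v x"
      by (simp add: dotp_def sum_distrib_left algebra_simps)
    then show ?thesis using that by simp
  qed
qed

lemma orth_span:
  fixes v :: "'a::field ^ 'n"
  assumes "\<And>h. h \<in> S \<Longrightarrow> dotp v h = 0"
  shows "v \<in> orth (vec.span S)"
proof -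
  have "vec.span S \<subseteq> {x. dotp v x = 0}"
    by (rule vec.span_minimal) (use assms dotp_subspace in auto)
  then show ?thesis by (auto simp: orth_def)
qed

lemma dual_exists:
  fixes w :: "'a::field ^ 'n"
  assumes "vec.subspace K" "w \<notin> K"
  shows "\<exists>v. v \<in> orth K \<and> dotp v w \<noteq> 0"
proof -
  obtain B where B: "B \<subseteq> K" "vec.independent B" "K \<subseteq> vec.span B"
    by (meson vec.basis_exists)
  have spB: "vec.span B = K"
    by (rule equalityI[OF vec.span_minimal[OF B(1) assms(1)] B(3)])
  have "w \<notin> vec.span B" using spB assms(2) by simp
  have ind: "vec.independent (insert w B)"
    by (rule vec.independent_insertI) fact+
  have wB: "w \<notin> B" using B(1) assms(2) by auto
  fix k0 :: 'n
  define g where "g = (\<lambda>b. if b = w then (axis k0 1 :: 'a ^ 'n) else 0)"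
  define f where "f = vec.construct (insert w B) g"
  have lin: "Vector_Spaces.linear (*s) (*s) f"
    unfolding f_def by (rule vec.linear_construct[OF ind])
  have fB: "f b = g b" if "b \<in> insert w B" for b
    unfolding f_def by (rule vec.construct_basis[OF ind that])
  interpret l: Vector_Spaces.linear "(*s)" "(*s)" f by (rule lin)
  define v where "v = (\<chi> j. (f (axis j 1)) $ k0)"
  have fx: "(f x) $ k0 = dotp v x" for x
  proof -
    have "f x = f (\<Sum>j\<in>UNIV. (x $ j) *s axis j 1)" by (simp only: basis_expansion)
    also have "\<dots> = (\<Sum>j\<in>UNIV. (x $ j) *s f (axis j 1))" by (simp only: l.sum l.scale)
    finally have "(f x) $ k0 = (\<Sum>j\<in>UNIV. x $ j * (f (axis j 1)) $ k0)"
      by (simp add: sum_component)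
    then show ?thesis by (simp add: dotp_def v_def mult.commute)
  qed
  have f0: "f h = 0" if "h \<in> K" for h
  proof -
    have "f h = (\<lambda>_. 0) h"
    proof (rule vec.linear_eq_on[OF lin])
      show "Vector_Spaces.linear (*s) (*s) (\<lambda>_. 0 :: 'a^'n)" by (rule vec.module_hom_zero)
      show "h \<in> vec.span B" using that spB by simp
      show "f b = 0" if "b \<in> B" for b using fB[of b] that wB by (auto simp: g_def)
    qed
    then show ?thesis by simp
  qed
  have "v \<in> orth K" unfolding orth_def
  proof (intro CollectI ballI)
    fix h assume "h \<in> K"
    then have "f h $ k0 = 0" using f0 by simp
    then show "dotp v h = 0" using fx[of h] by simp
  qed
  moreover have "dotp v w = 1" using fx[of w] fB[of w] by (simp add: g_def)
  ultimately show ?thesis by auto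
qed

lemma span_insert_mem:
  fixes w :: "'a::field ^ 'n"
  assumes "vec.subspace K" "w \<notin> K"
  shows "vec.span (insert w K) \<in> {W. vec.subspace W \<and> K \<subset> W \<and> vec.dim W = vec.dim K + 1}"
proof -
  have spK: "vec.span K = K" using assms(1) by (rule vec.span_eq_iff[THEN iffD2])
  have "w \<notin> vec.span K" by (subst spK) (rule assms(2))
  then have "vec.dim (vec.span (insert w K)) = vec.dim K + 1"
    by (simp add: vec.dim_insert)
  moreover have "K \<subset> vec.span (insert w K)"
    using vec.span_superset[of "insert w K"] assms(2) vec.span_base[of w "insert w K"] by blast
  ultimately show ?thesis by (simp add: vec.subspace_span)
qed

lemma mu_ge:
  fixes K :: "('a::{field,finite} ^ 'n) set"
  assumes "K \<noteq> UNIV" "W \<in> {W. vec.subspace W \<and> K \<subset> W \<and> vec.dim W = vec.dim K + 1}"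
  shows "Min (hweight ` (orth K - orth W)) \<le> mu K"
proof -
  have mem: "Min (hweight ` (orth K - orth W)) \<in> (\<lambda>W. Min (hweight ` (orth K - orth W)))
     ` {W. vec.subspace W \<and> K \<subset> W \<and> vec.dim W = vec.dim K + 1}"
    using assms(2) by (rule imageI)
  have muK: "mu K = Max ((\<lambda>W. Min (hweight ` (orth K - orth W)))
     ` {W. vec.subspace W \<and> K \<subset> W \<and> vec.dim W = vec.dim K + 1})"
    unfolding mu_def using assms(1) by (rule if_not_P)
  from mem have "Min (hweight ` (orth K - orth W)) \<le> Max ((\<lambda>W. Min (hweight ` (orth K - orth W)))
     ` {W. vec.subspace W \<and> K \<subset> W \<and> vec.dim W = vec.dim K + 1})" by (rule Max_ge[OF finite_imageI[OF finite]])
  then show ?thesis by (simp only: muK)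
qed

theorem lemma6p17:
  fixes H :: "('p::prime_card mod_ring ^ 'n::finite) set"
    and Hs :: "nat \<Rightarrow> ('p mod_ring ^ 'n) set"
    and r :: nat
  assumes "r \<ge> 1"
    and "vec.subspace H"
    and "\<And>i. i \<in> {1..r} \<Longrightarrow> vec.subspace (Hs i)"
    and "H = (\<Inter>i\<in>{1..r}. Hs i)"
  shows "\<exists>i\<in>{1..r}. mu (Hs i) \<ge> mu H"
proof (cases "H = UNIV")
  case True
  then show ?thesis using assms(1) by (auto simp: mu_def)
next
  case False
  define S where "S = {W. vec.subspace W \<and> H \<subset> W \<and> vec.dim W = vec.dim H + 1}"
  define F where "F = (\<lambda>W. Min (hweight ` (orth H - orth W)))"
  have muH: "mu H = Max (F ` S)" using False by (simp add: mu_def S_def F_def)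
  obtain x where "x \<notin> H" using False by blast
  then have "vec.span (insert x H) \<in> S" unfolding S_def by (rule span_insert_mem[OF assms(2)])
  then have "F ` S \<noteq> {}" by blast
  then have "Max (F ` S) \<in> F ` S" by (intro Max_in) auto
  then obtain W where W: "W \<in> S" "mu H = F W" using muH by auto
  then obtain w where w: "w \<in> W" "w \<notin> H" unfolding S_def by blast
  then obtain i where i: "i \<in> {1..r}" "w \<notin> Hs i" using assms(4) by blast
  define K where "K = Hs i"
  have K: "vec.subspace K" "w \<notin> K" using assms(3)[OF i(1)] i(2) by (auto simp: K_def)
  define Wi where "Wi = vec.span (insert w K)"
  have Wi: "Wi \<in> {W. vec.subspace W \<and> K \<subset> W \<and> vec.dim W = vec.dim K + 1}"
    unfolding Wi_def by (rule span_insert_mem[OF K])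
  have HK: "H \<subseteq> K" using assms(4) i(1) K_def by blast
  have sub: "orth K - orth Wi \<subseteq> orth H - orth W"
  proof
    fix u assume u: "u \<in> orth K - orth Wi"
    have "u \<in> orth H" using u HK by (auto simp: orth_def)
    moreover have "dotp u w \<noteq> 0"
    proof
      assume "dotp u w = 0"
      then have "u \<in> orth Wi" unfolding Wi_def
        by (intro orth_span) (use u in \<open>auto simp: orth_def\<close>)
      then show False using u by blast
    qed
    then have "u \<notin> orth W" using w(1) by (auto simp: orth_def)
    ultimately show "u \<in> orth H - orth W" by blast
  qed
  obtain v where v: "v \<in> orth K" "dotp v w \<noteq> 0" using dual_exists[OF K] by blast
  have "w \<in> Wi" unfolding Wi_def by (rule vec.span_base) simp
  then have "v \<notin> orth Wi" using v(2) by (auto simp: orth_def)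
  then have ne: "hweight ` (orth K - orth Wi) \<noteq> {}" using v(1) by blast
  have "mu H = Min (hweight ` (orth H - orth W))" using W(2) by (simp add: F_def)
  also have "\<dots> \<le> Min (hweight ` (orth K - orth Wi))"
    by (rule Min_antimono) (use sub ne in auto)
  also have "\<dots> \<le> mu K"
    by (rule mu_ge) (use K Wi in auto)
  finally show ?thesis using i(1) K_def by blast
qed

end
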